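(* Let $M>0$, $q,Q,\alpha,\beta\in\mathbb{R}$, let $\mathbf{n}\in\mathbb{R}^3$ be a constant unit vector, and let $U=\{\mathbf{x}\in\mathbb{R}^3\setminus\{0\}:\alpha\,\mathbf{x}\cdot\mathbf{n}+\beta>0\}$. On $\{(\mathbf{x},\boldsymbol{\Pi}):\mathbf{x}\in U,\ \boldsymbol{\Pi}\in\mathbb{R}^3\}$ consider the bracket $$\{P,R\}=\sum_i\Big(\frac{\partial P}{\partial x^i}\frac{\partial R}{\partial \Pi_i}-\frac{\partial P}{\partial \Pi_i}\frac{\partial R}{\partial x^i}\Big)+q\sum_{i,j}F_{ij}\frac{\partial P}{\partial \Pi_i}\frac{\partial R}{\partial \Pi_j},\qquad F_{ij}=\epsilon_{ijk}B^k,$$ where $\mathbf{B}(\mathbf{x})=\dfrac{\alpha}{\sqrt{\alpha\,\mathbf{x}\cdot\mathbf{n}+\beta}}\,\mathbf{n}$. Let $$H=\frac{\boldsymbol{\Pi}^2}{2M}+\frac{qQ}{r},\qquad r=|\mathbf{x}|,\qquad \mathbf{L}=\mathbf{x}\times\boldsymbol{\Pi},\qquad \mathbf{K}_2=\boldsymbol{\Pi}\times\mathbf{L}+MqQ\,\frac{\mathbf{x}}{r}.$$ Then the function $$K=\mathbf{n}\cdot\Big[\mathbf{K}_2+2q\sqrt{\alpha\,\mathbf{x}\cdot\mathbf{n}+\beta}\;\mathbf{L}\Big]+\alpha q^2\,(\mathbf{x}\times\mathbf{n})^2$$ satisfies $\{K,H\}=0$ identically.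
   Context: $\epsilon_{ijk}$ is the Levi-Civita symbol and indices are raised and lowered with the Euclidean metric $\delta_{ij}$. The variables $\Pi_i$ are the gauge-covariant (kinetic) momenta and the bracket above is the gauge-covariant Poisson bracket ($\{\Pi_i,\Pi_j\}=qF_{ij}$). This models a charge $q$ of mass $M$ in the Coulomb potential of a charge $Q$ superposed with a magnetic field directed along the fixed vector $\mathbf{n}$. *)

theory Defs
  imports "HOL-Analysis.Analysis"
begin

definition levi_civita :: "3 \<Rightarrow> 3 \<Rightarrow> 3 \<Rightarrow> real" where
  "levi_civita i j k =
     (if (i, j, k) \<in> {(1,2,3), (2,3,1), (3,1,2)} then 1
      else if (i, j, k) \<in> {(1,3,2), (3,2,1), (2,1,3)} then -1 else 0)"

definition pdx :: "(real^3 \<Rightarrow> real^3 \<Rightarrow> real) \<Rightarrow> 3 \<Rightarrow> real^3 \<Rightarrow> real^3 \<Rightarrow> real" where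
  "pdx P i x p = deriv (\<lambda>t. P (x + t *\<^sub>R axis i 1) p) 0"

definition pdp :: "(real^3 \<Rightarrow> real^3 \<Rightarrow> real) \<Rightarrow> 3 \<Rightarrow> real^3 \<Rightarrow> real^3 \<Rightarrow> real" where
  "pdp P i x p = deriv (\<lambda>t. P x (p + t *\<^sub>R axis i 1)) 0"

definition Bfield :: "real \<Rightarrow> real \<Rightarrow> real^3 \<Rightarrow> real^3 \<Rightarrow> real^3" where
  "Bfield \<alpha> \<beta> n x = (\<alpha> / sqrt (\<alpha> * (x \<bullet> n) + \<beta>)) *\<^sub>R n"

definition Ffield :: "real \<Rightarrow> real \<Rightarrow> real^3 \<Rightarrow> real^3 \<Rightarrow> 3 \<Rightarrow> 3 \<Rightarrow> real" where
  "Ffield \<alpha> \<beta> n x i j = (\<Sum>k\<in>UNIV. levi_civita i j k * (Bfield \<alpha> \<beta> n x $ k))"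

definition pbracket :: "real \<Rightarrow> real \<Rightarrow> real \<Rightarrow> real^3 \<Rightarrow>
    (real^3 \<Rightarrow> real^3 \<Rightarrow> real) \<Rightarrow> (real^3 \<Rightarrow> real^3 \<Rightarrow> real) \<Rightarrow> real^3 \<Rightarrow> real^3 \<Rightarrow> real" where
  "pbracket q \<alpha> \<beta> n P R x p =
     (\<Sum>i\<in>UNIV. pdx P i x p * pdp R i x p - pdp P i x p * pdx R i x p)
     + q * (\<Sum>i\<in>UNIV. \<Sum>j\<in>UNIV. Ffield \<alpha> \<beta> n x i j * pdp P i x p * pdp R j x p)"

definition Ham :: "real \<Rightarrow> real \<Rightarrow> real \<Rightarrow> real^3 \<Rightarrow> real^3 \<Rightarrow> real" where
  "Ham M q Q x p = (p \<bullet> p) / (2 * M) + q * Q / norm x"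

definition angmom :: "real^3 \<Rightarrow> real^3 \<Rightarrow> real^3" where
  "angmom x p = cross3 x p"

definition K2 :: "real \<Rightarrow> real \<Rightarrow> real \<Rightarrow> real^3 \<Rightarrow> real^3 \<Rightarrow> real^3" where
  "K2 M q Q x p = cross3 p (angmom x p) + (M * q * Q / norm x) *\<^sub>R x"

definition Kint :: "real \<Rightarrow> real \<Rightarrow> real \<Rightarrow> real \<Rightarrow> real \<Rightarrow> real^3 \<Rightarrow> real^3 \<Rightarrow> real^3 \<Rightarrow> real" where
  "Kint M q Q \<alpha> \<beta> n x p =
     n \<bullet> (K2 M q Q x p + (2 * q * sqrt (\<alpha> * (x \<bullet> n) + \<beta>)) *\<^sub>R angmom x p)
     + \<alpha> * q^2 * (cross3 x n \<bullet> cross3 x n)"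

definition domU :: "real \<Rightarrow> real \<Rightarrow> real^3 \<Rightarrow> (real^3) set" where
  "domU \<alpha> \<beta> n = {x. x \<noteq> 0 \<and> \<alpha> * (x \<bullet> n) + \<beta> > 0}"

end

theory Submission
  imports Defs
begin

lemma Kform: "Kint M q Q \<alpha> \<beta> n y p = (n\<bullet>y)*(p\<bullet>p) - (n\<bullet>p)*(p\<bullet>y) + M*q*Q*(n\<bullet>y)/sqrt(y\<bullet>y)
  + 2*q * sqrt(\<alpha>*(y\<bullet>n)+\<beta>)*(y\<bullet>cross3 p n) + \<alpha>*q^2*((y\<bullet>y)*(n\<bullet>n) - (y\<bullet>n)^2)"
  unfolding Kint_def K2_def angmom_def norm_eq_sqrt_inner
  by (simp add: cross3_simps power2_eq_square add_divide_distrib)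

lemma deriv_gen:
  fixes g h :: "real \<Rightarrow> real"
  assumes g: "(g has_real_derivative g') (at 0)" and h: "(h has_real_derivative h') (at 0)"
    and G: "g 0 = G0" and H: "h 0 = H0" and G0: "G0 \<noteq> 0" and H0: "H0 \<noteq> 0"
    and g': "g' = xe/G0" and h': "h' = \<alpha>*b/(2*H0)"
  shows "((\<lambda>t. (a + t*b)*pp - np*(c + t*d) + K*(a + t*b)/g t + 2*q * h t*(u + t*w)
     + \<alpha>*q^2*((xx + 2*t*xe + t^2*ee)*nn - (a + t*b)^2)) has_real_derivative
     (pp*b - np*d + K*(b/G0 - a*xe/G0^3) + 2*q * H0*w + q*\<alpha>*u*b/H0 + 2*\<alpha>*q^2*(nn*xe - a*b))) (at 0)"
  apply (rule derivative_eq_intros refl g h G0[folded G])+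
  using G0 H0 unfolding G H g' h' by (simp add: field_simps power2_eq_square power3_eq_cube)

lemma deriv_pdx_K:
  assumes "x \<bullet> x > 0" "\<alpha>*(x\<bullet>n)+\<beta> > 0"
  shows "((\<lambda>t. Kint M q Q \<alpha> \<beta> n (x + t *\<^sub>R e) p) has_real_derivative
     ((p\<bullet>p)*(e\<bullet>n) - (n\<bullet>p)*(p\<bullet>e) + M*q*Q*((e\<bullet>n)/sqrt(x\<bullet>x) - (x\<bullet>n)*(x\<bullet>e)/sqrt(x\<bullet>x)^3)
      + 2*q * sqrt(\<alpha>*(x\<bullet>n)+\<beta>)*(e\<bullet>cross3 p n) + q*\<alpha>*(x\<bullet>cross3 p n)*(e\<bullet>n)/sqrt(\<alpha>*(x\<bullet>n)+\<beta>)
      + 2*\<alpha>*q^2*((n\<bullet>n)*(x\<bullet>e) - (x\<bullet>n)*(e\<bullet>n)))) (at 0)"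
proof -
  have eq: "(\<lambda>t. Kint M q Q \<alpha> \<beta> n (x + t *\<^sub>R e) p) = (\<lambda>t.
     ((x\<bullet>n) + t*(e\<bullet>n))*(p\<bullet>p) - (n\<bullet>p)*((p\<bullet>x) + t*(p\<bullet>e))
     + M*q*Q*((x\<bullet>n) + t*(e\<bullet>n))/sqrt((x\<bullet>x) + 2*t*(x\<bullet>e) + t^2*(e\<bullet>e))
     + 2*q * sqrt(\<alpha>*((x\<bullet>n) + t*(e\<bullet>n))+\<beta>)*((x\<bullet>cross3 p n) + t*(e\<bullet>cross3 p n))
     + \<alpha>*q^2*(((x\<bullet>x) + 2*t*(x\<bullet>e) + t^2*(e\<bullet>e))*(n\<bullet>n) - ((x\<bullet>n) + t*(e\<bullet>n))^2))"
    unfolding Kform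
    by (rule ext) (simp add: inner_add_left inner_add_right inner_commute algebra_simps power2_eq_square)
  have dg: "((\<lambda>t. sqrt ((x\<bullet>x) + 2*t*(x\<bullet>e) + t^2*(e\<bullet>e))) has_real_derivative (x\<bullet>e)/sqrt(x\<bullet>x)) (at 0)"
    using assms apply (auto intro!: derivative_eq_intros simp: field_simps)
    using inner_ge_zero[of x] by linarith
  have dh: "((\<lambda>t. sqrt(\<alpha>*((x\<bullet>n) + t*(e\<bullet>n))+\<beta>)) has_real_derivative \<alpha>*(e\<bullet>n)/(2 * sqrt(\<alpha>*(x\<bullet>n)+\<beta>))) (at 0)"
    using assms by (auto intro!: derivative_eq_intros simp: field_simps)
  note D = deriv_gen[OF dg dh _ _ _ _ refl refl, where a="x\<bullet>n" and pp="p\<bullet>p" and np="n\<bullet>p" and c="p\<bullet>x" and d="p\<bullet>e" and K="M*q*Q" and q=q and u="x\<bullet>cross3 p n" and w="e\<bullet>cross3 p n" and xx="x\<bullet>x" and ee="e\<bullet>e" and nn="n\<bullet>n"]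
  show ?thesis unfolding eq
    apply (rule DERIV_cong[OF D])
    using assms by (simp_all add: algebra_simps)
qed


definition Gx :: "real \<Rightarrow> real \<Rightarrow> real \<Rightarrow> real \<Rightarrow> real^3 \<Rightarrow> real \<Rightarrow> real \<Rightarrow> real^3 \<Rightarrow> real^3 \<Rightarrow> real^3" where
  "Gx M q Q \<alpha> n r s x p = (p\<bullet>p) *\<^sub>R n - (n\<bullet>p) *\<^sub>R p + (M*q*Q/r) *\<^sub>R n - (M*q*Q*(x\<bullet>n)/r^3) *\<^sub>R x
     + (2*q * s) *\<^sub>R cross3 p n + (q*\<alpha>*(x\<bullet>cross3 p n)/s) *\<^sub>R n + (2*\<alpha>*q^2) *\<^sub>R ((n\<bullet>n) *\<^sub>R x - (x\<bullet>n) *\<^sub>R n)"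

definition Gp :: "real \<Rightarrow> real^3 \<Rightarrow> real \<Rightarrow> real^3 \<Rightarrow> real^3 \<Rightarrow> real^3" where
  "Gp q n s x p = (2*(n\<bullet>x)) *\<^sub>R p - (p\<bullet>x) *\<^sub>R n - (n\<bullet>p) *\<^sub>R x + (2*q * s) *\<^sub>R cross3 n x"

lemma final_alg:
  fixes r s M :: real
  assumes r: "r > 0" and s: "s > 0" and rr: "r*r = x\<bullet>x" and M: "M \<noteq> 0"
  shows "Gx M q Q \<alpha> n r s x p \<bullet> ((1/M) *\<^sub>R p) - Gp q n s x p \<bullet> ((- q*Q/r^3) *\<^sub>R x)
     + q*(((\<alpha>/s) *\<^sub>R n) \<bullet> cross3 (Gp q n s x p) ((1/M) *\<^sub>R p)) = 0"
proof -
  have h1: "Gx M q Q \<alpha> n r s x p \<bullet> p = M*q*Q*(n\<bullet>p)/r - M*q*Q*(x\<bullet>n)*(x\<bullet>p)/r^3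
     + q*\<alpha>*(x\<bullet>cross3 p n)*(n\<bullet>p)/s + 2*\<alpha>*q^2*((n\<bullet>n)*(x\<bullet>p) - (x\<bullet>n)*(n\<bullet>p))"
    unfolding Gx_def by (simp add: inner_add_left inner_diff_left inner_diff_right dot_cross_self inner_commute algebra_simps)
  have h2: "Gp q n s x p \<bullet> x = (x\<bullet>n)*(x\<bullet>p) - (n\<bullet>p)*(r*r)"
    unfolding Gp_def rr by (simp add: inner_add_left inner_diff_left dot_cross_self inner_commute algebra_simps)
  have h3: "n \<bullet> cross3 (Gp q n s x p) p = -(n\<bullet>p)*(x\<bullet>cross3 p n) + 2*q * s * ((x\<bullet>n)*(n\<bullet>p) - (n\<bullet>n)*(x\<bullet>p))"
    unfolding Gp_def by (simp add: cross3_simps)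
  show ?thesis
    using r s M by (simp add: inner_scaleR_right inner_scaleR_left cross_mult_right h1 h2 h3 field_simps power3_eq_cube power2_eq_square)
qed

lemma dg_lemma:
  assumes "x \<bullet> x > 0"
  shows "((\<lambda>t. sqrt ((x\<bullet>x) + 2*t*(x\<bullet>e) + t^2*(e\<bullet>e))) has_real_derivative (x\<bullet>e)/sqrt(x\<bullet>x)) (at 0)"
    using assms apply (auto intro!: derivative_eq_intros simp: field_simps)
    using inner_ge_zero[of x] by linarith

lemma deriv_gen_H:
  fixes g :: "real \<Rightarrow> real"
  assumes g: "(g has_real_derivative g') (at 0)" and G: "g 0 = G0" and G0: "G0 \<noteq> 0"
    and g': "g' = xe/G0"
  shows "((\<lambda>t. pp/(2*M) + q*Q/g t) has_real_derivative (- q*Q/G0^3*xe)) (at 0)"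
  apply (rule derivative_eq_intros refl g G0[folded G])+
  using G0 unfolding G g' by (simp add: field_simps power2_eq_square power3_eq_cube)

lemma pdx_H:
  assumes "x \<bullet> x > 0"
  shows "pdx (Ham M q Q) i x p = ((- q*Q/sqrt(x\<bullet>x)^3) *\<^sub>R x) $ i"
proof -
  let ?e = "axis i (1::real) :: real^3"
  have eq: "(\<lambda>t. Ham M q Q (x + t *\<^sub>R ?e) p) = (\<lambda>t. (p\<bullet>p)/(2*M) + q*Q/sqrt ((x\<bullet>x) + 2*t*(x\<bullet>?e) + t^2*(?e\<bullet>?e)))"
    unfolding Ham_def norm_eq_sqrt_inner
    by (rule ext) (simp add: inner_add_left inner_add_right inner_commute algebra_simps power2_eq_square)
  have D: "((\<lambda>t. Ham M q Q (x + t *\<^sub>R ?e) p) has_real_derivative (- q*Q/sqrt(x\<bullet>x)^3*(x\<bullet>?e))) (at 0)"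
    unfolding eq
    by (rule deriv_gen_H[OF dg_lemma[OF assms] _ _ refl]) (use assms in simp_all)
  show ?thesis unfolding pdx_def using DERIV_imp_deriv[OF D] by (simp add: inner_axis)
qed

lemma poly_deriv: "a \<noteq> 0 \<Longrightarrow> ((\<lambda>t::real. (pp + 2*t*pe + t^2*ee)/a + c) has_real_derivative 2*pe/a) (at 0)"
  by (auto intro!: derivative_eq_intros)

lemma sq_expand: "(p + t *\<^sub>R e) \<bullet> (p + t *\<^sub>R e) = p\<bullet>p + 2*t*(p\<bullet>e) + t^2*(e\<bullet>e)" for p e :: "real^3"
  by (simp add: inner_add_left inner_add_right inner_commute power2_eq_square algebra_simps)

lemma pdp_H:
  assumes "M \<noteq> 0"
  shows "pdp (Ham M q Q) i x p = ((1/M) *\<^sub>R p) $ i"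
proof -
  let ?e = "axis i (1::real) :: real^3"
  have eq: "(\<lambda>t. Ham M q Q x (p + t *\<^sub>R ?e)) = (\<lambda>t. ((p\<bullet>p) + 2*t*(p\<bullet>?e) + t^2*(?e\<bullet>?e))/(2*M) + q*Q/norm x)"
    unfolding Ham_def
    by (simp add: sq_expand)
  have D: "((\<lambda>t. Ham M q Q x (p + t *\<^sub>R ?e)) has_real_derivative ((p\<bullet>?e)/M)) (at 0)"
    unfolding eq
    apply (rule DERIV_cong[OF poly_deriv[where a="2*M" and pp="p\<bullet>p" and pe="p\<bullet>?e" and ee="?e\<bullet>?e" and c="q*Q/norm x"]])
    using assms by simp_all
  show ?thesis unfolding pdp_def using DERIV_imp_deriv[OF D] by (simp add: inner_axis)
qed

lemma pdx_K:
  assumes "x \<bullet> x > 0" "\<alpha>*(x\<bullet>n)+\<beta> > 0"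
  shows "pdx (Kint M q Q \<alpha> \<beta> n) i x p = Gx M q Q \<alpha> n (sqrt(x\<bullet>x)) (sqrt(\<alpha>*(x\<bullet>n)+\<beta>)) x p $ i"
proof -
  let ?e = "axis i (1::real) :: real^3"
  note D = deriv_pdx_K[OF assms, of M q Q ?e p]
  have "Gx M q Q \<alpha> n (sqrt(x\<bullet>x)) (sqrt(\<alpha>*(x\<bullet>n)+\<beta>)) x p \<bullet> ?e =
     ((p\<bullet>p)*(?e\<bullet>n) - (n\<bullet>p)*(p\<bullet>?e) + M*q*Q*((?e\<bullet>n)/sqrt(x\<bullet>x) - (x\<bullet>n)*(x\<bullet>?e)/sqrt(x\<bullet>x)^3)
      + 2*q * sqrt(\<alpha>*(x\<bullet>n)+\<beta>)*(?e\<bullet>cross3 p n) + q*\<alpha>*(x\<bullet>cross3 p n)*(?e\<bullet>n)/sqrt(\<alpha>*(x\<bullet>n)+\<beta>)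
      + 2*\<alpha>*q^2*((n\<bullet>n)*(x\<bullet>?e) - (x\<bullet>n)*(?e\<bullet>n)))"
    unfolding Gx_def inner_commute[of ?e n] inner_commute[of ?e "cross3 p n"]
    by (simp add: inner_add_left inner_diff_left inner_scaleR_left algebra_simps)
  then show ?thesis unfolding pdx_def using DERIV_imp_deriv[OF D] by (simp add: inner_axis)
qed

lemma deriv_pdp_K:
  assumes "x \<bullet> x > 0" "\<alpha>*(x\<bullet>n)+\<beta> > 0"
  shows "((\<lambda>t. Kint M q Q \<alpha> \<beta> n x (p + t *\<^sub>R e)) has_real_derivative
     (2*(n\<bullet>x)*(p\<bullet>e) - (n\<bullet>e)*(p\<bullet>x) - (n\<bullet>p)*(e\<bullet>x) + 2*q * sqrt(\<alpha>*(x\<bullet>n)+\<beta>)*(x\<bullet>cross3 e n))) (at 0)"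
proof -
  have eq: "(\<lambda>t. Kint M q Q \<alpha> \<beta> n x (p + t *\<^sub>R e)) = (\<lambda>t.
     (n\<bullet>x)*((p\<bullet>p) + 2*t*(p\<bullet>e) + t^2*(e\<bullet>e)) - ((n\<bullet>p) + t*(n\<bullet>e))*((p\<bullet>x) + t*(e\<bullet>x))
     + M*q*Q*(n\<bullet>x)/sqrt(x\<bullet>x)
     + 2*q * sqrt(\<alpha>*(x\<bullet>n)+\<beta>)*((x\<bullet>cross3 p n) + t*(x\<bullet>cross3 e n))
     + \<alpha>*q^2*((x\<bullet>x)*(n\<bullet>n) - (x\<bullet>n)^2))"
    unfolding Kform sq_expand
    by (rule ext) (simp only: inner_add_left inner_add_right inner_scaleR_left inner_scaleR_right cross_add_left cross_mult_left)
  show ?thesis unfolding eq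
    apply (rule derivative_eq_intros refl)+
    by (simp add: algebra_simps)
qed

lemma pdp_K:
  assumes "x \<bullet> x > 0" "\<alpha>*(x\<bullet>n)+\<beta> > 0"
  shows "pdp (Kint M q Q \<alpha> \<beta> n) i x p = Gp q n (sqrt(\<alpha>*(x\<bullet>n)+\<beta>)) x p $ i"
proof -
  let ?e = "axis i (1::real) :: real^3"
  note D = deriv_pdp_K[OF assms, of M q Q p ?e]
  have c: "cross3 n x \<bullet> ?e = x \<bullet> cross3 ?e n" by (simp add: cross3_simps)
  have "Gp q n (sqrt(\<alpha>*(x\<bullet>n)+\<beta>)) x p \<bullet> ?e =
     (2*(n\<bullet>x)*(p\<bullet>?e) - (n\<bullet>?e)*(p\<bullet>x) - (n\<bullet>p)*(?e\<bullet>x) + 2*q * sqrt(\<alpha>*(x\<bullet>n)+\<beta>)*(x\<bullet>cross3 ?e n))"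
    unfolding Gp_def by (simp only: inner_add_left inner_diff_left inner_scaleR_left c) (simp add: algebra_simps inner_commute)
  then show ?thesis unfolding pdp_def using DERIV_imp_deriv[OF D] by (simp add: inner_axis)
qed

lemma pb_formula:
  assumes "\<And>i. pdx P i x p = A$i" "\<And>i. pdp P i x p = Bv$i" "\<And>i. pdx R i x p = C$i" "\<And>i. pdp R i x p = D$i"
  shows "pbracket q \<alpha> \<beta> n P R x p = A\<bullet>D - Bv\<bullet>C + q*(Bfield \<alpha> \<beta> n x \<bullet> cross3 Bv D)"
  unfolding pbracket_def Ffield_def levi_civita_def assms
  by (simp add: sum_3 cross3_simps)

theorem mainTheorem3:
  fixes M q Q \<alpha> \<beta> :: real and n x p :: "real^3"
  assumes "M > 0" and "norm n = 1" and "x \<in> domU \<alpha> \<beta> n"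
  shows "pbracket q \<alpha> \<beta> n (Kint M q Q \<alpha> \<beta> n) (Ham M q Q) x p = 0"
proof -
  have x0: "x \<noteq> 0" and pos: "\<alpha>*(x\<bullet>n)+\<beta> > 0" using assms(3) by (auto simp: domU_def)
  have xx: "x\<bullet>x > 0" using x0 by simp
  have M0: "M \<noteq> 0" using assms(1) by simp
  have "pbracket q \<alpha> \<beta> n (Kint M q Q \<alpha> \<beta> n) (Ham M q Q) x p =
     Gx M q Q \<alpha> n (sqrt(x\<bullet>x)) (sqrt(\<alpha>*(x\<bullet>n)+\<beta>)) x p \<bullet> ((1/M) *\<^sub>R p)
     - Gp q n (sqrt(\<alpha>*(x\<bullet>n)+\<beta>)) x p \<bullet> ((- q*Q/sqrt(x\<bullet>x)^3) *\<^sub>R x)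
     + q*(Bfield \<alpha> \<beta> n x \<bullet> cross3 (Gp q n (sqrt(\<alpha>*(x\<bullet>n)+\<beta>)) x p) ((1/M) *\<^sub>R p))"
    by (rule pb_formula[OF pdx_K[OF xx pos] pdp_K[OF xx pos] pdx_H[OF xx] pdp_H[OF M0]])
  also have "\<dots> = 0"
    unfolding Bfield_def
    by (rule final_alg) (use xx pos M0 in auto)
  finally show ?thesis .
qed

end
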